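(* Assume $N\ge 2$ and $2\beta T>1$, and let $S\ge 1$ be an integer. (a) The Fixed-Share Forecaster (FSF) with parameters \[ \alpha=\frac1T,\qquad \gamma=\frac{1}{2\beta T},\qquad \eta=\sqrt{\frac{\log(NT)}{4\beta^2T\log\left(2\beta TN^3+N+2\right)}} \] satisfies, for every demand sequence $d_1,\dots,d_T\in\mathcal D$, \[ \mathbb E[\mathcal R_S(T)]\le 2(S+1)\beta\sqrt{T\log(NT)\log\left(2\beta TN^3+N+2\right)}+2\beta\sqrt{T\log N}+2. \] (b) The FSF with parameters \[ \alpha=\frac1T,\qquad \gamma=\frac{1}{2\beta T},\qquad \eta=\sqrt{\frac{S\log(NT)}{4\beta^2T\log\left(2\beta TN^3+N+2\right)}} \] satisfies, for every demand sequence $d_1,\dots,d_T\in\mathcal D$, \[ \mathbb E[\mathcal R_S(T)]\le 4\beta\sqrt{ST\log(NT)\log\left(2\beta TN^3+N+2\right)}+2\beta\sqrt{T\log N}+2. \]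
   Context: Fix integers $T\ge1$, $D\ge 1$ and reals $h,b>0$. Let $\mathcal T=\{1,\dots,T\}$, $\mathcal D=\{0,1,\dots,D\}$, let $\mathcal I\subseteq\mathcal D$ with $|\mathcal I|=N$, let $\beta=D\max\{h,b\}$, and let $c(i,d)=h(i-d)^+ + b(d-i)^+$. Logarithms are natural. For $d\in\mathcal D$, $e_d\in\mathbb R^{D+1}$ is the standard basis vector (coordinates indexed by $\{0,\dots,D\}$) with a $1$ in coordinate $d$. For $i\in\mathcal D$, the signal matrix $\mathbb S_i$ is the $(i+1)\times(D+1)$ $0/1$ matrix with rows indexed by $k\in\{1,\dots,i+1\}$ and columns by $d\in\{0,\dots,D\}$, with $\mathbb S_i(k,d)=1$ iff $\min\{i,d\}=k-1$; and $v_i\in\mathbb R^{i+1}$ is defined by $v_i(k)=hi-(h+b)(k-1)$, $k=1,\dots,i+1$. A demand sequence $d_1,\dots,d_T\in\mathcal D$ is fixed arbitrarily in advance. FSF policy with parameters $\eta>0$, $\gamma\in(0,1)$, $\alpha>0$: set $W_i(0)=1$ for all $i\in\mathcal I$. For $t=1,\dots,T$: let $W(t-1)=\sum_{i\in\mathcal I}W_i(t-1)$ and $p_i(t)=(1-\gamma)\frac{W_i(t-1)}{W(t-1)}+\frac{\gamma}{N}$; draw $I_t\in\mathcal I$ with $\mathbb P(I_t=i\mid I_1,\dots,I_{t-1})=p_i(t)$; observe $\min\{I_t,d_t\}$; for each $i\in\mathcal I$ compute $\tilde c(i,d_t)=\frac{\mathbb 1\{I_t\ge i\}}{\mathbb P_t(I_t\ge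 i)}\left(v_i^T\mathbb S_ie_{d_t}+\beta\right)$ with $\mathbb P_t(I_t\ge i)=\sum_{j\in\mathcal I,\,j\ge i}p_j(t)$; and set $W_i(t)=W_i(t-1)e^{-\eta\tilde c(i,d_t)}+\frac{\alpha}{N}\sum_{j\in\mathcal I}W_j(t-1)$. For a sequence $i_{[T]}=(i_1,\dots,i_T)\in\mathcal I^T$, its complexity is $C(i_{[T]})=\sum_{t=1}^{T}\mathbb 1\{i_t\ne i_{t+1}\}$ with the convention that the term for $t=T$ equals $1$ (so $C(i_{[T]})$ is the number of maximal blocks of consecutive periods on which $i_{[T]}$ is constant). Let $\mathcal I^T_S=\{i_{[T]}\in\mathcal I^T: C(i_{[T]})\le S\}$. The tracking regret is $\mathcal R_S(T)=\sum_{t\in\mathcal T}c(I_t,d_t)-\min_{i_{[T]}\in\mathcal I^T_S}\sum_{t\in\mathcal T}c(i_t,d_t)$; expectation is over the policy's randomization. *)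

theory Defs
  imports "HOL-Probability.Probability_Mass_Function"
begin

definition nv_cost :: "real \<Rightarrow> real \<Rightarrow> nat \<Rightarrow> nat \<Rightarrow> real" where
  "nv_cost h b i dd = h * max 0 (real i - real dd) + b * max 0 (real dd - real i)"

definition nv_beta :: "real \<Rightarrow> real \<Rightarrow> nat \<Rightarrow> real" where
  "nv_beta h b D = real D * max h b"

(* signal matrix S_i(k,d) = 1 iff min{i,d} = k-1, rows k = 1..i+1, columns d = 0..D *)
definition sig_mat :: "nat \<Rightarrow> nat \<Rightarrow> nat \<Rightarrow> real" where
  "sig_mat i k dd = (if min i dd = k - 1 then 1 else 0)"

definition sig_vec :: "real \<Rightarrow> real \<Rightarrow> nat \<Rightarrow> nat \<Rightarrow> real" where
  "sig_vec h b i k = h * real i - (h + b) * (real k - 1)"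

definition basis_vec :: "nat \<Rightarrow> nat \<Rightarrow> real" where
  "basis_vec d dd = (if dd = d then 1 else 0)"

(* v_i^T S_i e_d *)
definition sig_value :: "real \<Rightarrow> real \<Rightarrow> nat \<Rightarrow> nat \<Rightarrow> nat \<Rightarrow> real" where
  "sig_value h b D i d =
     (\<Sum>k = 1..i+1. sig_vec h b i k * (\<Sum>dd = 0..D. sig_mat i k dd * basis_vec d dd))"

(* p_i(t) computed from the weights W(t-1) *)
definition fsf_prob :: "nat set \<Rightarrow> real \<Rightarrow> (nat \<Rightarrow> real) \<Rightarrow> nat \<Rightarrow> real" where
  "fsf_prob I \<gamma> W i = (1 - \<gamma>) * W i / (\<Sum>j\<in>I. W j) + \<gamma> / real (card I)"

definition fsf_sample :: "nat set \<Rightarrow> real \<Rightarrow> (nat \<Rightarrow> real) \<Rightarrow> nat pmf" where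
  "fsf_sample I \<gamma> W = embed_pmf (\<lambda>i. if i \<in> I then fsf_prob I \<gamma> W i else 0)"

definition fsf_prob_ge :: "nat set \<Rightarrow> real \<Rightarrow> (nat \<Rightarrow> real) \<Rightarrow> nat \<Rightarrow> real" where
  "fsf_prob_ge I \<gamma> W i = (\<Sum>j\<in>{j\<in>I. j \<ge> i}. fsf_prob I \<gamma> W j)"

definition fsf_est :: "real \<Rightarrow> real \<Rightarrow> nat \<Rightarrow> nat set \<Rightarrow> real \<Rightarrow> (nat \<Rightarrow> real)
    \<Rightarrow> nat \<Rightarrow> nat \<Rightarrow> nat \<Rightarrow> real" where
  "fsf_est h b D I \<gamma> W It dt i =
     (if It \<ge> i then 1 else 0) / fsf_prob_ge I \<gamma> W i * (sig_value h b D i dt + nv_beta h b D)"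

definition fsf_update :: "real \<Rightarrow> real \<Rightarrow> nat \<Rightarrow> nat set \<Rightarrow> real \<Rightarrow> real \<Rightarrow> real
    \<Rightarrow> (nat \<Rightarrow> real) \<Rightarrow> nat \<Rightarrow> nat \<Rightarrow> (nat \<Rightarrow> real)" where
  "fsf_update h b D I \<eta> \<gamma> \<alpha> W It dt =
     (\<lambda>i. W i * exp (- \<eta> * fsf_est h b D I \<gamma> W It dt i)
          + \<alpha> / real (card I) * (\<Sum>j\<in>I. W j))"

(* joint law of the actions I_t, I_{t+1}, ..., I_{t+n-1}, given weights W(t-1) *)
primrec fsf_run :: "real \<Rightarrow> real \<Rightarrow> nat \<Rightarrow> nat set \<Rightarrow> (nat \<Rightarrow> nat) \<Rightarrow> real \<Rightarrow> real \<Rightarrow> real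
    \<Rightarrow> nat \<Rightarrow> (nat \<Rightarrow> real) \<Rightarrow> nat \<Rightarrow> nat list pmf" where
  "fsf_run h b D I d \<eta> \<gamma> \<alpha> t W 0 = return_pmf []"
| "fsf_run h b D I d \<eta> \<gamma> \<alpha> t W (Suc n) =
     bind_pmf (fsf_sample I \<gamma> W) (\<lambda>i.
       map_pmf (\<lambda>rest. i # rest)
         (fsf_run h b D I d \<eta> \<gamma> \<alpha> (Suc t) (fsf_update h b D I \<eta> \<gamma> \<alpha> W i (d t)) n))"

definition fsf_actions :: "real \<Rightarrow> real \<Rightarrow> nat \<Rightarrow> nat set \<Rightarrow> nat \<Rightarrow> (nat \<Rightarrow> nat)
    \<Rightarrow> real \<Rightarrow> real \<Rightarrow> real \<Rightarrow> nat list pmf" where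
  "fsf_actions h b D I T d \<eta> \<gamma> \<alpha> = fsf_run h b D I d \<eta> \<gamma> \<alpha> 1 (\<lambda>_. 1) T"

(* total cost of an action sequence (list index t-1 = period t) *)
definition total_cost :: "real \<Rightarrow> real \<Rightarrow> nat \<Rightarrow> (nat \<Rightarrow> nat) \<Rightarrow> nat list \<Rightarrow> real" where
  "total_cost h b T d is = (\<Sum>t = 1..T. nv_cost h b (is ! (t - 1)) (d t))"

definition seq_complexity :: "nat \<Rightarrow> nat list \<Rightarrow> nat" where
  "seq_complexity T is =
     (\<Sum>t = 1..T. if t = T then 1 else if is ! (t - 1) \<noteq> is ! t then 1 else 0)"

definition switching_set :: "nat set \<Rightarrow> nat \<Rightarrow> nat \<Rightarrow> nat list set" where
  "switching_set I T S = {is. length is = T \<and> set is \<subseteq> I \<and> seq_complexity T is \<le> S}"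

definition fsf_expected_regret :: "real \<Rightarrow> real \<Rightarrow> nat \<Rightarrow> nat set \<Rightarrow> nat \<Rightarrow> (nat \<Rightarrow> nat)
    \<Rightarrow> nat \<Rightarrow> real \<Rightarrow> real \<Rightarrow> real \<Rightarrow> real" where
  "fsf_expected_regret h b D I T d S \<eta> \<gamma> \<alpha> =
     measure_pmf.expectation (fsf_actions h b D I T d \<eta> \<gamma> \<alpha>) (total_cost h b T d)
     - (MIN is\<in>switching_set I T S. total_cost h b T d is)"

end

theory Submission
  imports Defs
begin



lemma exp_quad: assumes "(x::real) \<ge> 0" shows "exp (- x) \<le> 1 - x + x^2/2"
proof -
  have g: "0 \<le> y - 1 + exp (- y)" if "y \<ge> 0" for y :: real
  proof -
    have "(\<lambda>y. y - 1 + exp (- y)) 0 \<le> (\<lambda>y. y - 1 + exp (- y)) y"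
      by (rule DERIV_nonneg_imp_nondecreasing[OF that])
         (auto intro!: derivative_eq_intros exI[of _ "1 - exp (- _)"])
    then show ?thesis by simp
  qed
  have "(\<lambda>y. 1 - y + y^2/2 - exp (- y)) 0 \<le> (\<lambda>y. 1 - y + y^2/2 - exp (- y)) x"
    apply (rule DERIV_nonneg_imp_nondecreasing[OF assms])
    apply (rule exI[of _ "- 1 + _ + exp (- _)"])
    apply (auto intro!: derivative_eq_intros)
    using g by (auto simp: algebra_simps)
  then show ?thesis by simp
qed


lemma sig_value_eq:
  assumes "i \<le> D" "dd \<le> D"
  shows "sig_value h b D i dd = h * real i - (h + b) * real (min i dd)"
proof -
  have inner: "(\<Sum>x = 0..D. sig_mat i k x * basis_vec dd x) = sig_mat i k dd" for k
  proof -
    have "(\<Sum>x = 0..D. sig_mat i k x * basis_vec dd x) = (\<Sum>x = 0..D. if x = dd then sig_mat i k dd else 0)"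
      by (rule sum.cong) (auto simp: basis_vec_def)
    also have "\<dots> = sig_mat i k dd" using assms by (simp add: sum.delta)
    finally show ?thesis .
  qed
  have "sig_value h b D i dd = (\<Sum>k = 1..i+1. if k = min i dd + 1 then sig_vec h b i k else 0)"
    unfolding sig_value_def inner
    by (rule sum.cong) (auto simp: sig_mat_def)
  also have "\<dots> = sig_vec h b i (min i dd + 1)" by (simp add: sum.delta)
  also have "\<dots> = h * real i - (h + b) * real (min i dd)" by (simp add: sig_vec_def)
  finally show ?thesis .
qed

lemma exp_bind_finite:
  fixes f :: "'b \<Rightarrow> real"
  assumes fin: "finite (set_pmf M)" and finN: "\<And>x. x \<in> set_pmf M \<Longrightarrow> finite (set_pmf (N x))"
  shows "measure_pmf.expectation (bind_pmf M N) f
       = (\<Sum>x\<in>set_pmf M. pmf M x * measure_pmf.expectation (N x) f)"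
proof -
  define A where "A = (\<Union>x\<in>set_pmf M. set_pmf (N x))"
  have finA: "finite A" using fin finN by (auto simp: A_def)
  have "measure_pmf.expectation (bind_pmf M N) f = (\<Sum>a\<in>A. f a * pmf (bind_pmf M N) a)"
    by (rule integral_measure_pmf_real[OF finA]) (auto simp: A_def)
  also have "\<dots> = (\<Sum>a\<in>A. f a * (\<Sum>x\<in>set_pmf M. pmf (N x) a * pmf M x))"
  proof (rule sum.cong[OF refl])
    fix a assume "a \<in> A"
    have "pmf (bind_pmf M N) a = (\<integral>x. pmf (N x) a \<partial>measure_pmf M)" by (rule pmf_bind)
    also have "\<dots> = (\<Sum>x\<in>set_pmf M. pmf (N x) a * pmf M x)"
      by (rule integral_measure_pmf_real[OF fin]) auto
    finally show "f a * pmf (bind_pmf M N) a = f a * (\<Sum>x\<in>set_pmf M. pmf (N x) a * pmf M x)" by simp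
  qed
  also have "\<dots> = (\<Sum>x\<in>set_pmf M. pmf M x * (\<Sum>a\<in>A. f a * pmf (N x) a))"
    by (simp add: sum_distrib_left sum_distrib_right sum.swap[of _ A] mult_ac)
  also have "\<dots> = (\<Sum>x\<in>set_pmf M. pmf M x * measure_pmf.expectation (N x) f)"
  proof (rule sum.cong[OF refl])
    fix x assume x: "x \<in> set_pmf M"
    have "measure_pmf.expectation (N x) f = (\<Sum>a\<in>A. f a * pmf (N x) a)"
      by (rule integral_measure_pmf_real[OF finA]) (use x in \<open>auto simp: A_def\<close>)
    then show "pmf M x * (\<Sum>a\<in>A. f a * pmf (N x) a) = pmf M x * measure_pmf.expectation (N x) f" by simp
  qed
  finally show ?thesis .
qed

lemma tele:
  fixes a :: "nat \<Rightarrow> real"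
  assumes "finite A" "\<forall>k\<in>A. a k \<ge> 0" "\<epsilon> > 0"
  shows "(\<Sum>k\<in>A. a k / (\<epsilon> + (\<Sum>j\<in>{j\<in>A. k \<le> j}. a j))) \<le> ln ((\<epsilon> + (\<Sum>k\<in>A. a k)) / \<epsilon>)"
  using assms
proof (induction A rule: finite_linorder_min_induct)
  case empty
  then show ?case by simp
next
  case (insert c A)
  have cA: "c \<notin> A" using insert by auto
  have s0: "(\<Sum>k\<in>A. a k) \<ge> 0" using insert by (auto intro: sum_nonneg)
  define z where "z = \<epsilon> + (\<Sum>k\<in>A. a k)"
  define y where "y = \<epsilon> + (\<Sum>k\<in>insert c A. a k)"
  have zpos: "z > 0" using s0 insert by (simp add: z_def)
  have yz: "y = z + a c" using insert cA by (simp add: y_def z_def)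
  have ac: "a c \<ge> 0" using insert by auto
  have eqset: "{j \<in> insert c A. k \<le> j} = {j \<in> A. k \<le> j}" if "k \<in> A" for k
    using insert that by auto
  have eqc: "{j \<in> insert c A. c \<le> j} = insert c A" using insert by auto
  have "(\<Sum>k\<in>insert c A. a k / (\<epsilon> + (\<Sum>j\<in>{j\<in>insert c A. k \<le> j}. a j)))
      = a c / y + (\<Sum>k\<in>A. a k / (\<epsilon> + (\<Sum>j\<in>{j\<in>A. k \<le> j}. a j)))"
  proof -
    have "(\<Sum>k\<in>insert c A. a k / (\<epsilon> + (\<Sum>j\<in>{j\<in>insert c A. k \<le> j}. a j)))
      = a c / (\<epsilon> + (\<Sum>j\<in>{j\<in>insert c A. c \<le> j}. a j)) + (\<Sum>k\<in>A. a k / (\<epsilon> + (\<Sum>j\<in>{j\<in>insert c A. k \<le> j}. a j)))"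
      using insert(1) cA by (rule sum.insert)
    also have "(\<Sum>k\<in>A. a k / (\<epsilon> + (\<Sum>j\<in>{j\<in>insert c A. k \<le> j}. a j))) = (\<Sum>k\<in>A. a k / (\<epsilon> + (\<Sum>j\<in>{j\<in>A. k \<le> j}. a j)))"
      by (rule sum.cong[OF refl]) (simp only: eqset)
    also have "(\<Sum>j\<in>{j\<in>insert c A. c \<le> j}. a j) = (\<Sum>k\<in>insert c A. a k)" by (simp only: eqc)
    finally show ?thesis by (simp add: y_def)
  qed
  also have "\<dots> \<le> ln (y / z) + ln (z / \<epsilon>)"
  proof (rule add_mono)
    have "ln (z / y) \<le> z / y - 1" using zpos yz ac by (intro ln_le_minus_one) auto
    moreover have "ln (z / y) = - ln (y / z)" using zpos yz ac by (simp add: ln_div)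
    moreover have "z / y - 1 = - (a c / y)" using zpos yz ac by (simp add: field_simps)
    ultimately show "a c / y \<le> ln (y / z)" by linarith
    show "(\<Sum>k\<in>A. a k / (\<epsilon> + (\<Sum>j\<in>{j\<in>A. k \<le> j}. a j))) \<le> ln (z / \<epsilon>)"
      using insert by (simp add: z_def)
  qed
  also have "\<dots> = ln (y / \<epsilon>)" using zpos yz ac insert by (simp add: ln_div)
  finally show ?case by (simp add: y_def)
qed



fun sw :: "nat list \<Rightarrow> nat" where
  "sw (x # y # r) = (if x \<noteq> y then 1 else 0) + sw (y # r)"
| "sw _ = 0"

lemma exp_const_add: fixes f :: "'a \<Rightarrow> real" assumes "finite (set_pmf M)"
  shows "measure_pmf.expectation M (\<lambda>x. c + f x) = c + measure_pmf.expectation M f"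
  using assms by (simp add: integrable_measure_pmf_finite)

lemma exp_return: fixes f :: "'a \<Rightarrow> real" shows "measure_pmf.expectation (return_pmf x) f = f x"
  by (subst integral_measure_pmf_real[of "{x}"]) auto



locale fsf =
  fixes h b :: real and D :: nat and I :: "nat set" and d :: "nat \<Rightarrow> nat" and \<eta> \<gamma> \<alpha> :: real
  assumes hpos: "h > 0" and bpos: "b > 0" and Isub: "I \<subseteq> {0..D}" and Icard: "card I \<ge> 2"
    and dD: "\<And>t. d t \<le> D" and gpos: "\<gamma> > 0" and gle: "\<gamma> < 1"
    and apos: "\<alpha> > 0" and ale: "\<alpha> \<le> 1" and epos: "\<eta> > 0"
begin

abbreviation "\<beta> \<equiv> nv_beta h b D"
definition "NN = real (card I)"
definition pos :: "(nat \<Rightarrow> real) \<Rightarrow> bool" where "pos W \<longleftrightarrow> (\<forall>i\<in>I. W i > 0)"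
abbreviation "SW W \<equiv> (\<Sum>j\<in>I. W j)"
abbreviation "pr W i \<equiv> fsf_prob I \<gamma> W i"
definition ell :: "nat \<Rightarrow> nat \<Rightarrow> real" where "ell t k = sig_value h b D k (d t) + \<beta>"
abbreviation "cst t i \<equiv> nv_cost h b i (d t)"
abbreviation "upd W i t \<equiv> fsf_update h b D I \<eta> \<gamma> \<alpha> W i (d t)"
abbreviation "run t W n \<equiv> fsf_run h b D I d \<eta> \<gamma> \<alpha> t W n"

lemma finI: "finite I" using Isub finite_subset by blast
lemma NN2: "NN \<ge> 2" using Icard by (simp add: NN_def)
lemma Dpos: "D \<ge> 1"
proof (rule ccontr)
  assume "\<not> D \<ge> 1" then have "I \<subseteq> {0}" using Isub by auto
  then have "card I \<le> 1" using card_mono[of "{0}" I] by simp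
  then show False using Icard by simp
qed
lemma beta_pos: "\<beta> > 0" using Dpos hpos bpos by (simp add: nv_beta_def)
lemma bD: "b * real D \<le> \<beta>" "h * real D \<le> \<beta>"
proof -
  have "b * real D \<le> max h b * real D" "h * real D \<le> max h b * real D" by (auto intro: mult_right_mono)
  then show "b * real D \<le> \<beta>" "h * real D \<le> \<beta>" by (auto simp: nv_beta_def mult.commute)
qed

lemma inD: "i \<in> I \<Longrightarrow> i \<le> D" using Isub by auto

lemma cst_bounds: assumes "i \<le> D" shows "0 \<le> cst t i" "cst t i \<le> \<beta>"
proof -
  show "0 \<le> cst t i" using hpos bpos by (simp add: nv_cost_def)
  have dt: "d t \<le> D" by (rule dD)
  show "cst t i \<le> \<beta>"
  proof (cases "i \<le> d t")
    case True
    then have "cst t i = b * (real (d t) - real i)" by (simp add: nv_cost_def)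
    also have "\<dots> \<le> b * real D" using bpos dt by (intro mult_left_mono) auto
    finally show ?thesis using bD by linarith
  next
    case False
    then have "cst t i = h * (real i - real (d t))" by (simp add: nv_cost_def)
    also have "\<dots> \<le> h * real D" using hpos assms by (intro mult_left_mono) auto
    finally show ?thesis using bD by linarith
  qed
qed

lemma ell_eq: assumes "i \<le> D" shows "ell t i = cst t i - b * real (d t) + \<beta>"
proof -
  have "ell t i = h * real i - (h + b) * real (min i (d t)) + \<beta>"
    using sig_value_eq[OF assms dD] by (simp add: ell_def)
  then show ?thesis by (cases "i \<le> d t") (auto simp: nv_cost_def min_def algebra_simps)
qed

lemma ell_bounds: assumes "i \<le> D" shows "0 \<le> ell t i" "ell t i \<le> 2 * \<beta>"
proof -
  have a: "b * real (d t) \<le> b * real D" using bpos dD by (intro mult_left_mono) auto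
  have c: "b * real (d t) \<ge> 0" using bpos by simp
  show "0 \<le> ell t i" "ell t i \<le> 2 * \<beta>" using ell_eq[OF assms, of t] cst_bounds[OF assms, of t] bD a c
    by linarith+
qed

lemma SW_pos: "pos W \<Longrightarrow> SW W > 0"
  using finI Icard by (intro sum_pos) (auto simp: pos_def)

lemma pr_ge: assumes "pos W" "i \<in> I" shows "pr W i \<ge> \<gamma> / NN"
proof -
  have "(1 - \<gamma>) * W i / SW W \<ge> 0" using assms gle SW_pos[OF assms(1)] by (auto simp: pos_def)
  then show ?thesis by (simp add: fsf_prob_def NN_def)
qed

lemma pr_pos: assumes "pos W" "i \<in> I" shows "pr W i > 0"
  using pr_ge[OF assms] gpos NN2 by (smt (verit) divide_pos_pos)

lemma pr_sum: assumes "pos W" shows "(\<Sum>i\<in>I. pr W i) = 1"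
proof -
  have "(\<Sum>i\<in>I. pr W i) = (1 - \<gamma>) * SW W / SW W + real (card I) * (\<gamma> / real (card I))"
    by (simp add: fsf_prob_def sum.distrib sum_divide_distrib[symmetric] sum_distrib_left)
  also have "\<dots> = 1" using SW_pos[OF assms] Icard by simp
  finally show ?thesis .
qed

lemma pmf_sample: assumes "pos W"
  shows "pmf (fsf_sample I \<gamma> W) i = (if i \<in> I then pr W i else 0)"
  unfolding fsf_sample_def
proof (rule pmf_embed_pmf)
  show "\<And>x. 0 \<le> (if x \<in> I then pr W x else 0)" using pr_pos[OF assms] by (auto intro: less_imp_le)
  have "(\<integral>\<^sup>+ x. ennreal (if x \<in> I then pr W x else 0) \<partial>count_space UNIV)
      = (\<Sum>x\<in>I. ennreal (if x \<in> I then pr W x else 0))"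
    by (rule nn_integral_count_space'[OF finI]) auto
  also have "\<dots> = (\<Sum>x\<in>I. ennreal (pr W x))" by simp
  also have "\<dots> = ennreal (\<Sum>x\<in>I. pr W x)" using pr_pos[OF assms] by (intro sum_ennreal) (auto intro: less_imp_le)
  also have "\<dots> = 1" using pr_sum[OF assms] by simp
  finally show "(\<integral>\<^sup>+ x. ennreal (if x \<in> I then pr W x else 0) \<partial>count_space UNIV) = 1" .
qed

lemma set_sample: assumes "pos W" shows "set_pmf (fsf_sample I \<gamma> W) = I"
proof -
  have "pr W x \<noteq> 0" if "x \<in> I" for x using pr_pos[OF assms that] by simp
  then show ?thesis using pmf_sample[OF assms] by (auto simp: set_pmf_eq split: if_splits)
qed

lemma probge_pos: assumes "pos W" "k \<in> I" shows "fsf_prob_ge I \<gamma> W k \<ge> pr W k" "fsf_prob_ge I \<gamma> W k > 0"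
proof -
  have "pr W k \<le> (\<Sum>j\<in>{j\<in>I. j \<ge> k}. pr W j)"
    using assms finI pr_pos[OF assms(1)] by (intro member_le_sum) (auto intro: less_imp_le)
  then show "fsf_prob_ge I \<gamma> W k \<ge> pr W k" by (simp add: fsf_prob_ge_def)
  then show "fsf_prob_ge I \<gamma> W k > 0" using pr_pos[OF assms] by linarith
qed

lemma pos_upd: assumes "pos W" shows "pos (upd W i t)"
  unfolding pos_def fsf_update_def
proof
  fix k assume "k \<in> I"
  have "W k * exp (- \<eta> * fsf_est h b D I \<gamma> W i (d t) k) > 0" using assms \<open>k\<in>I\<close> by (auto simp: pos_def)
  moreover have "\<alpha> / real (card I) * SW W > 0" using apos SW_pos[OF assms] Icard by simp
  ultimately show "W k * exp (- \<eta> * fsf_est h b D I \<gamma> W i (d t) k) + \<alpha> / real (card I) * SW W > 0" by linarith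
qed

lemma run_fin: "pos W \<Longrightarrow> finite (set_pmf (run t W n))"
proof (induction n arbitrary: t W)
  case 0 then show ?case by simp
next
  case (Suc n) then show ?case by (simp add: set_sample finI pos_upd)
qed

lemma run_set: "pos W \<Longrightarrow> xs \<in> set_pmf (run t W n) \<Longrightarrow> length xs = n \<and> set xs \<subseteq> I"
proof (induction n arbitrary: t W xs)
  case 0 then show ?case by simp
next
  case (Suc n)
  from Suc.prems obtain i r where xs: "xs = i # r" "i \<in> I" "r \<in> set_pmf (run (Suc t) (upd W i t) n)"
    by (auto simp: set_sample)
  then show ?case using Suc.IH[OF pos_upd[OF Suc.prems(1)] xs(3)] by auto
qed

lemma exp_run: assumes "pos W"
  shows "measure_pmf.expectation (run t W (Suc n)) f
       = (\<Sum>i\<in>I. pr W i * measure_pmf.expectation (run (Suc t) (upd W i t) n) (\<lambda>r. f (i # r)))"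
proof -
  have "measure_pmf.expectation (run t W (Suc n)) f
      = (\<Sum>i\<in>set_pmf (fsf_sample I \<gamma> W). pmf (fsf_sample I \<gamma> W) i *
           measure_pmf.expectation (map_pmf ((#) i) (run (Suc t) (upd W i t) n)) f)"
    by (simp only: fsf_run.simps, rule exp_bind_finite)
       (auto simp: set_sample[OF assms] finI run_fin pos_upd[OF assms])
  also have "\<dots> = (\<Sum>i\<in>I. pr W i * measure_pmf.expectation (run (Suc t) (upd W i t) n) (\<lambda>r. f (i # r)))"
    apply (simp only: set_sample[OF assms])
    apply (rule sum.cong[OF refl])
    apply (simp add: pmf_sample[OF assms])
    done
  finally show ?thesis .
qed



abbreviation "PG W k \<equiv> fsf_prob_ge I \<gamma> W k"
abbreviation "est W i t k \<equiv> fsf_est h b D I \<gamma> W i (d t) k"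
definition q :: "(nat \<Rightarrow> real) \<Rightarrow> nat \<Rightarrow> real" where "q W k = W k / SW W"

lemma est_eq: "est W i t k = (if k \<le> i then ell t k / PG W k else 0)"
  by (simp add: fsf_est_def ell_def)

lemma est_nonneg: assumes "pos W" "k \<in> I" shows "est W i t k \<ge> 0"
  using ell_bounds(1)[OF inD[OF assms(2)], of t] probge_pos(2)[OF assms] by (simp add: est_eq)

lemma q_nonneg: "pos W \<Longrightarrow> k \<in> I \<Longrightarrow> q W k \<ge> 0"
  using SW_pos by (auto simp: q_def pos_def intro: less_imp_le)

lemma q_sum: "pos W \<Longrightarrow> (\<Sum>k\<in>I. q W k) = 1"
  using SW_pos[of W] by (simp add: q_def sum_divide_distrib[symmetric])

lemma pr_q: "pr W k = (1 - \<gamma>) * q W k + \<gamma> / NN"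
  by (simp add: fsf_prob_def q_def NN_def)

lemma PG_sum: "PG W k = (\<Sum>i\<in>I. if k \<le> i then pr W i else 0)"
  unfolding fsf_prob_ge_def using finI by (simp add: sum.inter_filter)

lemma E1: assumes "pos W" "k \<in> I" shows "(\<Sum>i\<in>I. pr W i * est W i t k) = ell t k"
proof -
  have "(\<Sum>i\<in>I. pr W i * est W i t k) = (\<Sum>i\<in>I. (if k \<le> i then pr W i else 0)) * (ell t k / PG W k)"
    by (simp only: sum_distrib_right, rule sum.cong) (auto simp: est_eq)
  also have "\<dots> = ell t k" using probge_pos(2)[OF assms] by (simp add: PG_sum[symmetric])
  finally show ?thesis .
qed

lemma E2: assumes "pos W" "k \<in> I" shows "(\<Sum>i\<in>I. pr W i * (est W i t k)^2) = (ell t k)^2 / PG W k"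
proof -
  have "(\<Sum>i\<in>I. pr W i * (est W i t k)^2) = (\<Sum>i\<in>I. (if k \<le> i then pr W i else 0)) * ((ell t k / PG W k)^2)"
    by (simp only: sum_distrib_right, rule sum.cong) (auto simp: est_eq)
  also have "\<dots> = (ell t k)^2 / PG W k" using probge_pos(2)[OF assms]
    by (simp add: PG_sum[symmetric] power2_eq_square)
  finally show ?thesis .
qed

lemma PG_lower: assumes "pos W" "k \<in> I"
  shows "PG W k \<ge> \<gamma> / NN + (\<Sum>j\<in>{j\<in>I. k \<le> j}. (1 - \<gamma>) * q W j)"
proof -
  have fin: "finite {j\<in>I. k \<le> j}" using finI by simp
  have "PG W k = (\<Sum>j\<in>{j\<in>I. k \<le> j}. (1 - \<gamma>) * q W j) + (\<Sum>j\<in>{j\<in>I. k \<le> j}. \<gamma> / NN)"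
    by (simp add: fsf_prob_ge_def pr_q sum.distrib)
  moreover have "(\<Sum>j\<in>{j\<in>I. k \<le> j}. \<gamma> / NN) \<ge> \<gamma> / NN"
  proof -
    have "card {j\<in>I. k \<le> j} \<ge> 1" proof -
      have "card {j\<in>I. k \<le> j} > 0" using assms fin by (auto simp: card_gt_0_iff)
      then show ?thesis by simp
    qed
    then have "real (card {j\<in>I. k \<le> j}) * (\<gamma> / NN) \<ge> 1 * (\<gamma> / NN)"
      using gpos NN2 by (intro mult_right_mono) auto
    then show ?thesis by simp
  qed
  ultimately show ?thesis by linarith
qed



fun cost_from :: "nat \<Rightarrow> nat list \<Rightarrow> real" where
  "cost_from t [] = 0"
| "cost_from t (i # r) = cst t i + cost_from (Suc t) r"


end

locale fsf2 = fsf + assumes gle2: "\<gamma> \<le> 1/2"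
begin

lemma VB0: assumes "pos W" shows "(\<Sum>k\<in>I. q W k / PG W k) \<le> 2 * ln (1 + NN / \<gamma>)"
proof -
  define a where "a = (\<lambda>j. (1 - \<gamma>) * q W j)"
  define \<epsilon> where "\<epsilon> = \<gamma> / NN"
  have epos: "\<epsilon> > 0" using gpos NN2 by (simp add: \<epsilon>_def)
  have anneg: "\<forall>k\<in>I. a k \<ge> 0" using q_nonneg[OF assms] gle2 by (simp add: a_def)
  have g1: "1 - \<gamma> > 0" using gle2 by simp
  have step: "q W k / PG W k \<le> (1 / (1 - \<gamma>)) * (a k / (\<epsilon> + (\<Sum>j\<in>{j\<in>I. k \<le> j}. a j)))" if k: "k \<in> I" for k
  proof -
    have den: "\<epsilon> + (\<Sum>j\<in>{j\<in>I. k \<le> j}. a j) > 0" using epos anneg by (smt (verit) mem_Collect_eq sum_nonneg)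
    have "q W k / PG W k \<le> q W k / (\<epsilon> + (\<Sum>j\<in>{j\<in>I. k \<le> j}. a j))"
      using PG_lower[OF assms k] q_nonneg[OF assms k] den
      by (intro divide_left_mono) (auto simp: a_def \<epsilon>_def)
    also have "\<dots> = (1 / (1 - \<gamma>)) * (a k / (\<epsilon> + (\<Sum>j\<in>{j\<in>I. k \<le> j}. a j)))"
      using g1 by (simp add: a_def)
    finally show ?thesis .
  qed
  have "(\<Sum>k\<in>I. q W k / PG W k) \<le> (\<Sum>k\<in>I. (1 / (1 - \<gamma>)) * (a k / (\<epsilon> + (\<Sum>j\<in>{j\<in>I. k \<le> j}. a j))))"
    by (rule sum_mono) (rule step)
  also have "\<dots> = (1 / (1 - \<gamma>)) * (\<Sum>k\<in>I. a k / (\<epsilon> + (\<Sum>j\<in>{j\<in>I. k \<le> j}. a j)))"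
    by (simp add: sum_distrib_left)
  also have "\<dots> \<le> (1 / (1 - \<gamma>)) * ln ((\<epsilon> + (\<Sum>k\<in>I. a k)) / \<epsilon>)"
    using g1 by (intro mult_left_mono tele finI anneg epos) auto
  also have "(\<Sum>k\<in>I. a k) = 1 - \<gamma>" using q_sum[OF assms] by (simp add: a_def sum_distrib_left[symmetric])
  also have "ln ((\<epsilon> + (1 - \<gamma>)) / \<epsilon>) \<le> ln (1 + NN / \<gamma>)"
  proof -
    have "(\<epsilon> + (1 - \<gamma>)) / \<epsilon> = 1 + NN * (1 - \<gamma>) / \<gamma>" using gpos NN2 by (simp add: \<epsilon>_def field_simps)
    also have "\<dots> \<le> 1 + NN / \<gamma>" using gpos NN2 gle2 by (simp add: divide_right_mono)
    finally show ?thesis using epos g1 by (intro ln_mono) auto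
  qed
  then have "(1 / (1 - \<gamma>)) * ln ((\<epsilon> + (1 - \<gamma>)) / \<epsilon>) \<le> (1 / (1 - \<gamma>)) * ln (1 + NN / \<gamma>)"
    using g1 by (intro mult_left_mono) auto
  also have "\<dots> \<le> 2 * ln (1 + NN / \<gamma>)"
  proof (rule mult_right_mono)
    show "1 / (1 - \<gamma>) \<le> 2" using gle2 g1 by (simp add: field_simps)
    show "0 \<le> ln (1 + NN / \<gamma>)" using gpos NN2 by simp
  qed
  finally show ?thesis by simp
qed

lemma VB: assumes "pos W" shows "(\<Sum>k\<in>I. q W k * (ell t k)^2 / PG W k) \<le> 8 * \<beta>^2 * ln (1 + NN / \<gamma>)"
proof -
  have "(\<Sum>k\<in>I. q W k * (ell t k)^2 / PG W k) \<le> (\<Sum>k\<in>I. (4 * \<beta>^2) * (q W k / PG W k))"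
  proof (rule sum_mono)
    fix k assume k: "k \<in> I"
    have "(ell t k)^2 \<le> (2 * \<beta>)^2" using ell_bounds[OF inD[OF k], of t] by (intro power_mono) auto
    then have "(ell t k)^2 \<le> 4 * \<beta>^2" by (simp add: power2_eq_square)
    moreover have "q W k / PG W k \<ge> 0" using q_nonneg[OF assms k] probge_pos(2)[OF assms k] by simp
    ultimately have "(q W k / PG W k) * (ell t k)^2 \<le> (q W k / PG W k) * (4 * \<beta>^2)" by (intro mult_left_mono)
    then show "q W k * (ell t k)^2 / PG W k \<le> (4 * \<beta>^2) * (q W k / PG W k)" by (simp add: field_simps)
  qed
  also have "\<dots> = 4 * \<beta>^2 * (\<Sum>k\<in>I. q W k / PG W k)" by (simp add: sum_distrib_left)
  also have "\<dots> \<le> 4 * \<beta>^2 * (2 * ln (1 + NN / \<gamma>))" by (intro mult_left_mono VB0 assms) auto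
  finally show ?thesis by simp
qed



definition Pot :: "(nat \<Rightarrow> real) \<Rightarrow> nat \<Rightarrow> real" where "Pot W j = ln (SW W) - ln (W j)"

lemma W_le_SW: assumes "pos W" "j \<in> I" shows "W j \<le> SW W"
  using assms finI by (intro member_le_sum) (auto simp: pos_def intro: less_imp_le)

lemma Pot_nonneg: assumes "pos W" "j \<in> I" shows "Pot W j \<ge> 0"
proof -
  have "W j \<le> SW W" using assms finI by (intro member_le_sum) (auto simp: pos_def intro: less_imp_le)
  then show ?thesis using assms by (auto simp: Pot_def pos_def)
qed

lemma upd_eq: "upd W i t k = W k * exp (- (\<eta> * est W i t k)) + \<alpha> / NN * SW W"
  by (simp add: fsf_update_def NN_def)

lemma SW_upd: "SW (upd W i t) = (\<Sum>k\<in>I. W k * exp (- (\<eta> * est W i t k))) + \<alpha> * SW W"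
proof -
  have "SW (upd W i t) = (\<Sum>k\<in>I. W k * exp (- (\<eta> * est W i t k))) + (\<Sum>k\<in>I. \<alpha> / NN * SW W)"
    by (simp add: upd_eq sum.distrib)
  also have "(\<Sum>k\<in>I. \<alpha> / NN * SW W) = \<alpha> * SW W" using NN2 by (simp add: NN_def)
  finally show ?thesis .
qed

lemma PW: assumes W: "pos W" and j: "j \<in> I" and j': "j' \<in> I"
  shows "Pot (upd W i t) j' \<le> Pot W j + \<alpha> - \<eta> * (\<Sum>k\<in>I. q W k * est W i t k)
          + \<eta>^2 / 2 * (\<Sum>k\<in>I. q W k * (est W i t k)^2) + \<eta> * est W i t j
          + (if j \<noteq> j' then ln (NN / \<alpha>) else 0)"
proof -
  define S where "S = SW W"
  define W' where "W' = upd W i t"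
  define x where "x = (\<lambda>k. \<eta> * est W i t k)"
  have Spos: "S > 0" using SW_pos[OF W] by (simp add: S_def)
  have W'pos: "pos W'" using pos_upd[OF W] by (simp add: W'_def)
  have xnn: "x k \<ge> 0" if "k \<in> I" for k using est_nonneg[OF W that] epos by (simp add: x_def)
  define Z where "Z = 1 + \<alpha> - \<eta> * (\<Sum>k\<in>I. q W k * est W i t k) + \<eta>^2 / 2 * (\<Sum>k\<in>I. q W k * (est W i t k)^2)"
  have "SW W' = (\<Sum>k\<in>I. W k * exp (- x k)) + \<alpha> * S" by (simp add: W'_def SW_upd x_def S_def)
  also have "(\<Sum>k\<in>I. W k * exp (- x k)) \<le> (\<Sum>k\<in>I. W k * (1 - x k + (x k)^2 / 2))"
    using W xnn by (intro sum_mono mult_left_mono exp_quad) (auto simp: pos_def intro: less_imp_le)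
  also have "(\<Sum>k\<in>I. W k * (1 - x k + (x k)^2 / 2)) + \<alpha> * S = S * Z"
  proof -
    have "(\<Sum>k\<in>I. W k * (1 - x k + (x k)^2 / 2)) = S - \<eta> * (\<Sum>k\<in>I. W k * est W i t k) + \<eta>^2/2 * (\<Sum>k\<in>I. W k * (est W i t k)^2)"
      by (simp add: x_def S_def algebra_simps sum.distrib sum_subtractf sum_distrib_left power2_eq_square sum_divide_distrib)
    moreover have "(\<Sum>k\<in>I. W k * est W i t k) = S * (\<Sum>k\<in>I. q W k * est W i t k)"
      using Spos by (simp add: q_def S_def sum_distrib_left)
    moreover have "(\<Sum>k\<in>I. W k * (est W i t k)^2) = S * (\<Sum>k\<in>I. q W k * (est W i t k)^2)"
      using Spos by (simp add: q_def S_def sum_distrib_left)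
    ultimately show ?thesis by (simp add: Z_def algebra_simps)
  qed
  finally have SW': "SW W' \<le> S * Z" by simp
  have SW'pos: "SW W' > 0" using SW_pos[OF W'pos] .
  then have Zpos: "Z > 0" using SW' Spos by (smt (verit) mult_nonpos_nonneg zero_less_mult_iff)
  have lnSW': "ln (SW W') \<le> ln S + (Z - 1)"
  proof -
    have "ln (SW W') \<le> ln (S * Z)" using SW' SW'pos by simp
    also have "\<dots> = ln S + ln Z" using Spos Zpos by (simp add: ln_mult)
    also have "ln Z \<le> Z - 1" using Zpos by (rule ln_le_minus_one)
    finally show ?thesis by simp
  qed
  have Wj: "W j > 0" using W j by (simp add: pos_def)
  have lnW': "ln (W' j') \<ge> ln (W j) - x j - (if j \<noteq> j' then ln (NN / \<alpha>) else 0)"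
  proof (cases "j = j'")
    case True
    have "W' j \<ge> W j * exp (- x j)" using apos NN2 Spos
      by (simp add: W'_def upd_eq x_def S_def)
    moreover have "W j * exp (- x j) > 0" using Wj by simp
    ultimately have "ln (W' j) \<ge> ln (W j * exp (- x j))" by simp
    then show ?thesis using True Wj by (simp add: ln_mult)
  next
    case False
    have "W j' > 0" using W j' by (simp add: pos_def)
    then have "W' j' \<ge> \<alpha> / NN * S" by (simp add: W'_def upd_eq x_def S_def)
    moreover have "\<alpha> / NN * S \<ge> \<alpha> / NN * W j"
      using W_le_SW[OF W j] apos NN2 by (intro mult_left_mono) (auto simp: S_def)
    ultimately have "W' j' \<ge> \<alpha> / NN * W j" by linarith
    moreover have "\<alpha> / NN * W j > 0" using Wj apos NN2 by simp
    ultimately have "ln (W' j') \<ge> ln (\<alpha> / NN * W j)" by simp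
    also have "ln (\<alpha> / NN * W j) = ln (W j) - ln (NN / \<alpha>)" using Wj apos NN2 by (simp add: ln_mult ln_div)
    finally show ?thesis using False xnn[OF j] by simp
  qed
  have "Pot (upd W i t) j' = ln (SW W') - ln (W' j')" by (simp add: Pot_def W'_def)
  also have "\<dots> \<le> ln S + (Z - 1) - (ln (W j) - x j - (if j \<noteq> j' then ln (NN / \<alpha>) else 0))"
    using lnSW' lnW' by linarith
  finally show ?thesis by (simp add: Pot_def S_def Z_def x_def)
qed



lemma swap1: assumes "pos W"
  shows "(\<Sum>i\<in>I. pr W i * (\<Sum>k\<in>I. q W k * est W i t k)) = (\<Sum>k\<in>I. q W k * ell t k)"
proof -
  have "(\<Sum>i\<in>I. pr W i * (\<Sum>k\<in>I. q W k * est W i t k)) = (\<Sum>i\<in>I. \<Sum>k\<in>I. pr W i * (q W k * est W i t k))"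
    by (simp add: sum_distrib_left)
  also have "\<dots> = (\<Sum>k\<in>I. \<Sum>i\<in>I. pr W i * (q W k * est W i t k))" by (rule sum.swap)
  also have "\<dots> = (\<Sum>k\<in>I. q W k * (\<Sum>i\<in>I. pr W i * est W i t k))"
    by (simp add: sum_distrib_left mult.left_commute)
  also have "\<dots> = (\<Sum>k\<in>I. q W k * ell t k)" using E1[OF assms] by simp
  finally show ?thesis .
qed

lemma swap2: assumes "pos W"
  shows "(\<Sum>i\<in>I. pr W i * (\<Sum>k\<in>I. q W k * (est W i t k)^2)) = (\<Sum>k\<in>I. q W k * (ell t k)^2 / PG W k)"
proof -
  have "(\<Sum>i\<in>I. pr W i * (\<Sum>k\<in>I. q W k * (est W i t k)^2)) = (\<Sum>i\<in>I. \<Sum>k\<in>I. pr W i * (q W k * (est W i t k)^2))"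
    by (simp add: sum_distrib_left)
  also have "\<dots> = (\<Sum>k\<in>I. \<Sum>i\<in>I. pr W i * (q W k * (est W i t k)^2))" by (rule sum.swap)
  also have "\<dots> = (\<Sum>k\<in>I. q W k * (\<Sum>i\<in>I. pr W i * (est W i t k)^2))"
    by (simp add: sum_distrib_left mult.left_commute)
  also have "\<dots> = (\<Sum>k\<in>I. q W k * (ell t k)^2 / PG W k)" using E2[OF assms] by simp
  finally show ?thesis .
qed

lemma OS: assumes W: "pos W" and j: "j \<in> I" and j': "j' \<in> I"
  shows "\<eta> * ((\<Sum>i\<in>I. pr W i * cst t i) - cst t j)
     \<le> Pot W j - (\<Sum>i\<in>I. pr W i * Pot (upd W i t) j') + \<alpha> + 2 * \<beta> * \<gamma> * \<eta>
        + \<eta>^2 / 2 * (8 * \<beta>^2 * ln (1 + NN / \<gamma>)) + (if j \<noteq> j' then ln (NN / \<alpha>) else 0)"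
proof -
  define C where "C = Pot W j + \<alpha> + (if j \<noteq> j' then ln (NN / \<alpha>) else 0)"
  define A where "A = (\<lambda>i. - \<eta> * (\<Sum>k\<in>I. q W k * est W i t k)
          + \<eta>^2 / 2 * (\<Sum>k\<in>I. q W k * (est W i t k)^2) + \<eta> * est W i t j)"
  have prn: "pr W i \<ge> 0" if "i \<in> I" for i using pr_pos[OF W that] by simp
  have "(\<Sum>i\<in>I. pr W i * Pot (upd W i t) j') \<le> (\<Sum>i\<in>I. pr W i * (C + A i))"
  proof (rule sum_mono)
    fix i assume i: "i \<in> I"
    have "Pot (upd W i t) j' \<le> C + A i" using PW[OF W j j', of i t] by (simp add: C_def A_def)
    then show "pr W i * Pot (upd W i t) j' \<le> pr W i * (C + A i)" using prn[OF i] by (rule mult_left_mono)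
  qed
  also have "(\<Sum>i\<in>I. pr W i * (C + A i)) = C * (\<Sum>i\<in>I. pr W i) + (\<Sum>i\<in>I. pr W i * A i)"
    by (simp add: algebra_simps sum.distrib sum_distrib_left)
  also have "(\<Sum>i\<in>I. pr W i * A i) = - \<eta> * (\<Sum>k\<in>I. q W k * ell t k)
       + \<eta>^2 / 2 * (\<Sum>k\<in>I. q W k * (ell t k)^2 / PG W k) + \<eta> * ell t j"
  proof -
    have "(\<Sum>i\<in>I. pr W i * A i) = - \<eta> * (\<Sum>i\<in>I. pr W i * (\<Sum>k\<in>I. q W k * est W i t k))
       + \<eta>^2 / 2 * (\<Sum>i\<in>I. pr W i * (\<Sum>k\<in>I. q W k * (est W i t k)^2)) + \<eta> * (\<Sum>i\<in>I. pr W i * est W i t j)"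
      by (simp add: A_def algebra_simps sum.distrib sum_distrib_left)
    then show ?thesis using swap1[OF W] swap2[OF W] E1[OF W j] by simp
  qed
  finally have main: "(\<Sum>i\<in>I. pr W i * Pot (upd W i t) j') \<le> C - \<eta> * (\<Sum>k\<in>I. q W k * ell t k)
       + \<eta>^2 / 2 * (\<Sum>k\<in>I. q W k * (ell t k)^2 / PG W k) + \<eta> * ell t j"
    using pr_sum[OF W] by simp
  have vb: "\<eta>^2 / 2 * (\<Sum>k\<in>I. q W k * (ell t k)^2 / PG W k) \<le> \<eta>^2 / 2 * (8 * \<beta>^2 * ln (1 + NN / \<gamma>))"
    using VB[OF W, of t] by (intro mult_left_mono) auto
  have pl: "(\<Sum>i\<in>I. pr W i * ell t i) \<le> (\<Sum>k\<in>I. q W k * ell t k) + 2 * \<beta> * \<gamma>"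
  proof -
    have "(\<Sum>i\<in>I. pr W i * ell t i) = (1 - \<gamma>) * (\<Sum>k\<in>I. q W k * ell t k) + \<gamma> / NN * (\<Sum>k\<in>I. ell t k)"
    proof -
      have "(\<Sum>i\<in>I. pr W i * ell t i) = (\<Sum>i\<in>I. (1 - \<gamma>) * (q W i * ell t i) + \<gamma> / NN * ell t i)"
        by (rule sum.cong) (auto simp: pr_q algebra_simps)
      then show ?thesis by (simp add: sum.distrib sum_distrib_left)
    qed
    moreover have "(\<Sum>k\<in>I. q W k * ell t k) \<ge> 0"
      using q_nonneg[OF W] ell_bounds(1)[OF inD] by (intro sum_nonneg) auto
    moreover have "(\<Sum>k\<in>I. ell t k) \<le> NN * (2 * \<beta>)"
    proof -
      have "(\<Sum>k\<in>I. ell t k) \<le> (\<Sum>k\<in>I. 2 * \<beta>)" using ell_bounds(2)[OF inD] by (intro sum_mono) auto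
      then show ?thesis by (simp add: NN_def)
    qed
    moreover have "\<gamma> / NN * (NN * (2 * \<beta>)) = 2 * \<beta> * \<gamma>" using NN2 by simp
    moreover have "\<gamma> / NN \<ge> 0" using gpos NN2 by simp
    ultimately show ?thesis using gpos gle2
    proof -
      assume e: "(\<Sum>i\<in>I. pr W i * ell t i) = (1 - \<gamma>) * (\<Sum>k\<in>I. q W k * ell t k) + \<gamma> / NN * (\<Sum>k\<in>I. ell t k)"
        and x: "(\<Sum>k\<in>I. q W k * ell t k) \<ge> 0" and s: "(\<Sum>k\<in>I. ell t k) \<le> NN * (2 * \<beta>)"
        and g: "\<gamma> / NN * (NN * (2 * \<beta>)) = 2 * \<beta> * \<gamma>" "\<gamma> / NN \<ge> 0"
      have "\<gamma> / NN * (\<Sum>k\<in>I. ell t k) \<le> \<gamma> / NN * (NN * (2 * \<beta>))" using s g(2) by (rule mult_left_mono)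
      moreover have "\<gamma> * (\<Sum>k\<in>I. q W k * ell t k) \<ge> 0" using x gpos by simp
      ultimately show ?thesis using e g(1) by (simp add: algebra_simps)
    qed
  qed
  have cl: "(\<Sum>i\<in>I. pr W i * cst t i) - cst t j = (\<Sum>i\<in>I. pr W i * ell t i) - ell t j"
  proof -
    have "(\<Sum>i\<in>I. pr W i * ell t i) = (\<Sum>i\<in>I. pr W i * cst t i) + (\<Sum>i\<in>I. pr W i) * (\<beta> - b * real (d t))"
      by (simp add: ell_eq[OF inD] algebra_simps sum.distrib sum_distrib_left sum_distrib_right sum_subtractf)
    then show ?thesis using pr_sum[OF W] ell_eq[OF inD[OF j]] by simp
  qed
  have "\<eta> * ((\<Sum>i\<in>I. pr W i * cst t i) - cst t j) \<le> \<eta> * ((\<Sum>k\<in>I. q W k * ell t k) + 2 * \<beta> * \<gamma> - ell t j)"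
    using pl epos cl by (intro mult_left_mono) auto
  then show ?thesis using main vb by (simp add: C_def algebra_simps)
qed


definition "KK = \<alpha> + 2 * \<beta> * \<gamma> * \<eta> + \<eta>^2 / 2 * (8 * \<beta>^2 * ln (1 + NN / \<gamma>))"

lemma exp_run_cost: assumes "pos W"
  shows "measure_pmf.expectation (run t W (Suc n)) (cost_from t)
     = (\<Sum>i\<in>I. pr W i * (cst t i + measure_pmf.expectation (run (Suc t) (upd W i t) n) (cost_from (Suc t))))"
  unfolding exp_run[OF assms]
  by (rule sum.cong[OF refl]) (simp add: exp_const_add run_fin pos_upd[OF assms])

lemma IND: "pos W \<Longrightarrow> j \<in> I \<Longrightarrow> set js \<subseteq> I \<Longrightarrow>
  \<eta> * (measure_pmf.expectation (run t W (Suc (length js))) (cost_from t) - cost_from t (j # js))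
   \<le> Pot W j + real (Suc (length js)) * KK + real (sw (j # js)) * ln (NN / \<alpha>)"
proof (induction js arbitrary: j t W)
  case Nil
  have E: "measure_pmf.expectation (run t W (Suc 0)) (cost_from t) = (\<Sum>i\<in>I. pr W i * cst t i)"
    unfolding exp_run_cost[OF Nil(1)] by (simp add: exp_return)
  have "(\<Sum>i\<in>I. pr W i * Pot (upd W i t) j) \<ge> 0"
    using pr_pos[OF Nil(1)] Pot_nonneg[OF pos_upd[OF Nil(1)] Nil(2)]
    by (intro sum_nonneg) (simp add: less_imp_le)
  then show ?case using OS[OF Nil(1) Nil(2) Nil(2), of t] E by (simp add: KK_def)
next
  case (Cons j' js')
  note W = Cons.prems(1) and j = Cons.prems(2)
  have j': "j' \<in> I" and js': "set js' \<subseteq> I" using Cons.prems(3) by auto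
  define n where "n = Suc (length js')"
  define R where "R = cost_from (Suc t) (j' # js')"
  define Ei where "Ei = (\<lambda>i. measure_pmf.expectation (run (Suc t) (upd W i t) n) (cost_from (Suc t)))"
  define M where "M = real (Suc (length js')) * KK + real (sw (j' # js')) * ln (NN / \<alpha>)"
  have IH: "\<eta> * (Ei i - R) \<le> Pot (upd W i t) j' + M" if "i \<in> I" for i
  proof -
    have "\<eta> * (measure_pmf.expectation (run (Suc t) (upd W i t) (Suc (length js'))) (cost_from (Suc t)) - cost_from (Suc t) (j' # js'))
      \<le> Pot (upd W i t) j' + real (Suc (length js')) * KK + real (sw (j' # js')) * ln (NN / \<alpha>)"
      by (rule Cons.IH) (use pos_upd[OF W] j' js' in auto)
    then show ?thesis by (simp add: Ei_def R_def M_def n_def)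
  qed
  have E: "measure_pmf.expectation (run t W (Suc (length (j' # js')))) (cost_from t)
        = (\<Sum>i\<in>I. pr W i * (cst t i + Ei i))"
    using exp_run_cost[OF W, of t n] by (simp add: n_def Ei_def)
  have prn: "pr W i \<ge> 0" if "i \<in> I" for i using pr_pos[OF W that] by simp
  have H: "(\<Sum>i\<in>I. pr W i * (\<eta> * (Ei i - R))) \<le> (\<Sum>i\<in>I. pr W i * (Pot (upd W i t) j' + M))"
    using IH prn by (intro sum_mono mult_left_mono) auto
  have H2: "(\<Sum>i\<in>I. pr W i * (Pot (upd W i t) j' + M)) = (\<Sum>i\<in>I. pr W i * Pot (upd W i t) j') + M"
    using pr_sum[OF W] by (simp add: algebra_simps sum.distrib sum_distrib_left[symmetric])
  have H3: "\<eta> * ((\<Sum>i\<in>I. pr W i * (cst t i + Ei i)) - (cst t j + R))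
      = \<eta> * ((\<Sum>i\<in>I. pr W i * cst t i) - cst t j) + (\<Sum>i\<in>I. pr W i * (\<eta> * (Ei i - R)))"
  proof -
    have "(\<Sum>i\<in>I. pr W i * (\<eta> * (Ei i - R))) = \<eta> * (\<Sum>i\<in>I. pr W i * Ei i) - \<eta> * R * (\<Sum>i\<in>I. pr W i)"
      by (simp add: algebra_simps sum_subtractf sum_distrib_left sum_distrib_right)
    then show ?thesis using pr_sum[OF W] by (simp add: algebra_simps sum.distrib)
  qed
  have os: "\<eta> * ((\<Sum>i\<in>I. pr W i * cst t i) - cst t j)
     \<le> Pot W j - (\<Sum>i\<in>I. pr W i * Pot (upd W i t) j') + KK + real (if j \<noteq> j' then 1 else 0) * ln (NN / \<alpha>)"
    using OS[OF W j j', of t] by (cases "j = j'") (simp_all add: KK_def algebra_simps)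
  have "\<eta> * (measure_pmf.expectation (run t W (Suc (length (j' # js')))) (cost_from t) - cost_from t (j # j' # js'))
      = \<eta> * ((\<Sum>i\<in>I. pr W i * (cst t i + Ei i)) - (cst t j + R))"
    by (simp only: E cost_from.simps R_def)
  also have "\<dots> \<le> Pot W j + KK + real (if j \<noteq> j' then 1 else 0) * ln (NN / \<alpha>) + M"
    using H3 os H H2 by linarith
  also have "\<dots> = Pot W j + real (Suc (length (j' # js'))) * KK + real (sw (j # j' # js')) * ln (NN / \<alpha>)"
    by (simp add: M_def algebra_simps)
  finally show ?case .
qed


end



lemma sum_1_T: "(\<Sum>t = 1..T. f t) = (\<Sum>t<T. f (Suc t))"
  by (induction T) (auto simp: sum.cl_ivl_Suc)

lemma seq_sw: "xs \<noteq> [] \<Longrightarrow> seq_complexity (length xs) xs = Suc (sw xs)"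
proof (induction xs rule: sw.induct)
  case (1 x y r)
  define g where "g = (\<lambda>xs::nat list. \<lambda>t. if Suc t = length xs then 1 else if xs ! t \<noteq> xs ! Suc t then (1::nat) else 0)"
  have sc: "seq_complexity (length xs) xs = (\<Sum>t<length xs. g xs t)" for xs
    unfolding seq_complexity_def sum_1_T g_def by (rule sum.cong) auto
  have "(\<Sum>t<length (x # y # r). g (x # y # r) t) = g (x # y # r) 0 + (\<Sum>t<length (y # r). g (x # y # r) (Suc t))"
    by (simp only: length_Cons sum.lessThan_Suc_shift)
  also have "(\<Sum>t<length (y # r). g (x # y # r) (Suc t)) = (\<Sum>t<length (y # r). g (y # r) t)"
    by (rule sum.cong) (auto simp: g_def)
  also have "g (x # y # r) 0 = (if x \<noteq> y then 1 else 0)" by (simp add: g_def)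
  finally have C: "(\<Sum>t<length (x # y # r). g (x # y # r) t) = (if x \<noteq> y then 1 else 0) + (\<Sum>t<length (y # r). g (y # r) t)" .
  have IH: "seq_complexity (length (y # r)) (y # r) = Suc (sw (y # r))" using 1 by simp
  show ?case unfolding sc[of "x # y # r"] C sc[of "y # r", symmetric] IH by simp
next
  case "2_1" then show ?case by simp
next
  case ("2_2" x) then show ?case by (simp add: seq_complexity_def)
qed

context fsf begin

lemma cost_from_sum: "cost_from s xs = (\<Sum>t<length xs. cst (s + t) (xs ! t))"
proof (induction xs arbitrary: s)
  case Nil then show ?case by simp
next
  case (Cons i r)
  show ?case by (simp only: length_Cons sum.lessThan_Suc_shift) (simp add: Cons)
qed

lemma total_cost_eq: "length xs = T \<Longrightarrow> total_cost h b T d xs = cost_from 1 xs"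
  unfolding total_cost_def sum_1_T cost_from_sum by simp

lemma pos1: "pos (\<lambda>_. 1)" by (simp add: pos_def)

lemma actions_exp: "measure_pmf.expectation (fsf_actions h b D I T d \<eta> \<gamma> \<alpha>) (total_cost h b T d)
   = measure_pmf.expectation (run 1 (\<lambda>_. 1) T) (cost_from 1)"
  unfolding fsf_actions_def
  by (intro integral_cong_AE AE_pmfI) (auto simp: total_cost_eq run_set[OF pos1])

lemma sw_fin: "finite (switching_set I T S)"
proof -
  have "switching_set I T S \<subseteq> {xs. set xs \<subseteq> I \<and> length xs = T}" by (auto simp: switching_set_def)
  moreover have "finite {xs. set xs \<subseteq> I \<and> length xs = T}" using finI by (rule finite_lists_length_eq)
  ultimately show ?thesis by (rule finite_subset)
qed

lemma sw_ne: assumes "T \<ge> 1" "S \<ge> 1" shows "switching_set I T S \<noteq> {}"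
proof -
  obtain i where i: "i \<in> I" using Icard by (metis card.empty ex_in_conv not_numeral_le_zero)
  have "seq_complexity T (replicate T i) = 1"
    using seq_sw[of "replicate T i"] assms
  proof -
    have "sw (replicate n i) = 0" for n by (induction n rule: nat_less_induct) (case_tac n; case_tac "n - 1"; auto)
    then show ?thesis using seq_sw[of "replicate T i"] assms by simp
  qed
  then have "replicate T i \<in> switching_set I T S" using i assms by (auto simp: switching_set_def)
  then show ?thesis by auto
qed

lemma regret_attained: assumes "T \<ge> 1" "S \<ge> 1"
  shows "\<exists>c\<in>switching_set I T S. fsf_expected_regret h b D I T d S \<eta> \<gamma> \<alpha>
      = measure_pmf.expectation (run 1 (\<lambda>_. 1) T) (cost_from 1) - cost_from 1 c"
proof -
  have "Min (total_cost h b T d ` switching_set I T S) \<in> total_cost h b T d ` switching_set I T S"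
    using sw_fin sw_ne[OF assms] by (intro Min_in) auto
  then obtain c where c: "c \<in> switching_set I T S" "Min (total_cost h b T d ` switching_set I T S) = total_cost h b T d c"
    by auto
  then have "length c = T" by (simp add: switching_set_def)
  then show ?thesis using c by (intro bexI[of _ c]) (auto simp: fsf_expected_regret_def actions_exp total_cost_eq)
qed

lemma trivial_bound: assumes "T \<ge> 1" "S \<ge> 1"
  shows "fsf_expected_regret h b D I T d S \<eta> \<gamma> \<alpha> \<le> \<beta> * real T"
proof -
  obtain c where c: "c \<in> switching_set I T S" and r: "fsf_expected_regret h b D I T d S \<eta> \<gamma> \<alpha>
      = measure_pmf.expectation (run 1 (\<lambda>_. 1) T) (cost_from 1) - cost_from 1 c"
    using regret_attained[OF assms] by blast
  have bnd: "0 \<le> cost_from s xs \<and> cost_from s xs \<le> \<beta> * real (length xs)" if "set xs \<subseteq> I" for s xs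
    using that
  proof (induction xs arbitrary: s)
    case Nil then show ?case by simp
  next
    case (Cons i r)
    then have "0 \<le> cst s i" "cst s i \<le> \<beta>" using cst_bounds[OF inD] by auto
    with Cons.IH[of "Suc s"] Cons.prems show ?case by (auto simp: algebra_simps)
  qed
  have "measure_pmf.expectation (run 1 (\<lambda>_. 1) T) (cost_from 1) \<le> measure_pmf.expectation (run 1 (\<lambda>_. 1) T) (\<lambda>_. \<beta> * real T)"
    by (intro integral_mono_AE AE_pmfI)
       (auto simp: integrable_measure_pmf_finite run_fin[OF pos1] dest!: run_set[OF pos1] intro!: bnd[THEN conjunct2, simplified])
  also have "\<dots> = \<beta> * real T" by simp
  finally show ?thesis using r bnd[of c 1] c by (auto simp: switching_set_def)
qed

end

context fsf2 begin

lemma regret_main: assumes "T \<ge> 1" "S \<ge> 1"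
  shows "fsf_expected_regret h b D I T d S \<eta> \<gamma> \<alpha> \<le> (ln NN + real T * KK + (real S - 1) * ln (NN / \<alpha>)) / \<eta>"
proof -
  obtain c where c: "c \<in> switching_set I T S" and r: "fsf_expected_regret h b D I T d S \<eta> \<gamma> \<alpha>
      = measure_pmf.expectation (run 1 (\<lambda>_. 1) T) (cost_from 1) - cost_from 1 c"
    using regret_attained[OF assms] by blast
  have len: "length c = T" and cI: "set c \<subseteq> I" and cS: "seq_complexity T c \<le> S"
    using c by (auto simp: switching_set_def)
  obtain j js where cj: "c = j # js" using len assms by (cases c) auto
  have j: "j \<in> I" and js: "set js \<subseteq> I" using cI cj by auto
  have "\<eta> * (measure_pmf.expectation (run 1 (\<lambda>_. 1) (Suc (length js))) (cost_from 1) - cost_from 1 (j # js))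
   \<le> Pot (\<lambda>_. 1) j + real (Suc (length js)) * KK + real (sw (j # js)) * ln (NN / \<alpha>)"
    by (rule IND[OF pos1 j js])
  moreover have "Pot (\<lambda>_. 1) j = ln NN" by (simp add: Pot_def NN_def)
  moreover have "Suc (length js) = T" using len cj by simp
  moreover have "real (sw (j # js)) \<le> real S - 1"
    using seq_sw[of c] cS len cj by simp
  moreover have "ln (NN / \<alpha>) \<ge> 0" using NN2 apos ale by (simp add: le_divide_eq)
  ultimately have "\<eta> * (measure_pmf.expectation (run 1 (\<lambda>_. 1) T) (cost_from 1) - cost_from 1 c)
      \<le> ln NN + real T * KK + (real S - 1) * ln (NN / \<alpha>)"
    using cj by (smt (verit) mult_right_mono)
  moreover have "\<eta> * fsf_expected_regret h b D I T d S \<eta> \<gamma> \<alpha> = \<eta> * (measure_pmf.expectation (run 1 (\<lambda>_. 1) T) (cost_from 1) - cost_from 1 c)"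
    using r by simp
  ultimately show ?thesis using epos by (simp add: pos_le_divide_eq mult.commute)
qed

end


lemma run_cong: "(\<And>s. t \<le> s \<Longrightarrow> s < t + n \<Longrightarrow> d s = d' s) \<Longrightarrow>
   fsf_run h b D I d \<eta> \<gamma> \<alpha> t W n = fsf_run h b D I d' \<eta> \<gamma> \<alpha> t W n"
proof (induction n arbitrary: t W)
  case 0 then show ?case by simp
next
  case (Suc n)
  have dt: "d t = d' t" using Suc.prems by simp
  have "fsf_run h b D I d \<eta> \<gamma> \<alpha> (Suc t) W' n = fsf_run h b D I d' \<eta> \<gamma> \<alpha> (Suc t) W' n" for W'
    by (rule Suc.IH) (use Suc.prems in auto)
  then show ?case by (simp add: dt)
qed

lemma regret_cong: assumes "\<forall>t\<in>{1..T}. d t = d' t"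
  shows "fsf_expected_regret h b D I T d S \<eta> \<gamma> \<alpha> = fsf_expected_regret h b D I T d' S \<eta> \<gamma> \<alpha>"
proof -
  have "fsf_actions h b D I T d \<eta> \<gamma> \<alpha> = fsf_actions h b D I T d' \<eta> \<gamma> \<alpha>"
    unfolding fsf_actions_def by (rule run_cong) (use assms in auto)
  moreover have "total_cost h b T d = total_cost h b T d'"
    using assms by (auto simp: total_cost_def fun_eq_iff intro!: sum.cong)
  ultimately show ?thesis by (simp add: fsf_expected_regret_def)
qed

lemma mkloc:
  fixes h b :: real and D T S :: nat and I :: "nat set" and d :: "nat \<Rightarrow> nat"
  assumes "T \<ge> 1" "h > 0" "b > 0"
    and "I \<subseteq> {0..D}" "card I \<ge> 2"
    and "2 * nv_beta h b D * real T > 1"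
    and "\<forall>t\<in>{1..T}. d t \<in> {0..D}"
    and "\<eta> > 0"
  shows "fsf h b D I (\<lambda>t. if t \<in> {1..T} then d t else 0) \<eta> (1 / (2 * nv_beta h b D * real T)) (1 / real T)"
    and "nv_beta h b D * real T \<ge> 1 \<Longrightarrow> fsf2 h b D I (\<lambda>t. if t \<in> {1..T} then d t else 0) \<eta> (1 / (2 * nv_beta h b D * real T)) (1 / real T)"
proof -
  have bpos: "nv_beta h b D * real T > 0" using assms(6) by linarith
  show f: "fsf h b D I (\<lambda>t. if t \<in> {1..T} then d t else 0) \<eta> (1 / (2 * nv_beta h b D * real T)) (1 / real T)"
  proof (unfold_locales)
    show "\<And>t. (if t \<in> {1..T} then d t else 0) \<le> D" using assms(7) by auto
    show "0 < 1 / (2 * nv_beta h b D * real T)" using bpos by (simp add: mult.commute)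
    have h1: "1 / x < 1" if "x > 1" for x :: real using that by simp
    show "1 / (2 * nv_beta h b D * real T) < 1" using assms(6) by (rule h1)
    show "0 < 1 / real T" using assms(1) by simp
    show "1 / real T \<le> 1" using assms(1) by simp
  qed (use assms in auto)
  show "fsf2 h b D I (\<lambda>t. if t \<in> {1..T} then d t else 0) \<eta> (1 / (2 * nv_beta h b D * real T)) (1 / real T)"
    if "nv_beta h b D * real T \<ge> 1"
    unfolding fsf2_def fsf2_axioms_def
  proof (intro conjI f)
    have "2 * nv_beta h b D * real T \<ge> 2" using that by simp
    then show "1 / (2 * nv_beta h b D * real T) \<le> 1 / 2" by (intro divide_left_mono) auto
  qed
qed

lemma bound_general:
  fixes h b :: real and D T S :: nat and I :: "nat set" and d :: "nat \<Rightarrow> nat"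
  assumes A: "T \<ge> 1" "h > 0" "b > 0" "I \<subseteq> {0..D}" "card I \<ge> 2"
    "2 * nv_beta h b D * real T > 1" "S \<ge> 1" "\<forall>t\<in>{1..T}. d t \<in> {0..D}" "\<eta> > 0"
    and big: "nv_beta h b D * real T \<ge> 1"
  shows "fsf_expected_regret h b D I T d S \<eta> (1 / (2 * nv_beta h b D * real T)) (1 / real T)
    \<le> (ln (real (card I)) + 1 + (real S - 1) * ln (real (card I) * real T)) / \<eta> + 1
       + 4 * \<eta> * (nv_beta h b D)^2 * real T * ln (1 + 2 * nv_beta h b D * real T * real (card I))"
proof -
  define d' where "d' = (\<lambda>t. if t \<in> {1..T} then d t else 0)"
  define \<beta> where "\<beta> = nv_beta h b D"
  define \<gamma> where "\<gamma> = 1 / (2 * \<beta> * real T)"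
  define \<alpha> where "\<alpha> = 1 / real T"
  have F: "fsf2 h b D I d' \<eta> \<gamma> \<alpha>" using mkloc(2)[OF A(1-6,8,9) big] by (simp add: d'_def \<gamma>_def \<alpha>_def \<beta>_def)
  have R: "fsf_expected_regret h b D I T d S \<eta> \<gamma> \<alpha> = fsf_expected_regret h b D I T d' S \<eta> \<gamma> \<alpha>"
    by (rule regret_cong) (simp add: d'_def)
  have M: "fsf_expected_regret h b D I T d' S \<eta> \<gamma> \<alpha> \<le> (ln (fsf.NN I) + real T * fsf2.KK h b D I \<eta> \<gamma> \<alpha> + (real S - 1) * ln (fsf.NN I / \<alpha>)) / \<eta>"
    by (rule fsf2.regret_main[OF F A(1) A(7)])
  have F1: "fsf h b D I d' \<eta> \<gamma> \<alpha>" using F unfolding fsf2_def by simp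
  have NN: "fsf.NN I = real (card I)" by (rule fsf.NN_def[OF F1])
  have bp: "\<beta> > 0" "real T > 0"
  proof -
    show "real T > 0" using A(1) by simp
    then show "\<beta> > 0" using A(6) unfolding \<beta>_def by (smt (verit) mult_nonpos_nonneg mult_nonneg_nonpos)
  qed
  define l1 where "l1 = ln (1 + 2 * \<beta> * real T * real (card I))"
  have a1: "real T * \<alpha> = 1" using bp by (simp add: \<alpha>_def)
  have g1: "2 * \<beta> * \<gamma> * real T = 1" using bp by (simp add: \<gamma>_def)
  have n1: "real (card I) / \<gamma> = 2 * \<beta> * real T * real (card I)" using bp by (simp add: \<gamma>_def)
  have KK: "real T * fsf2.KK h b D I \<eta> \<gamma> \<alpha> = 1 + \<eta> + 4 * \<eta>^2 * \<beta>^2 * real T * l1"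
  proof -
    have "real T * fsf2.KK h b D I \<eta> \<gamma> \<alpha> = real T * \<alpha> + (2 * \<beta> * \<gamma> * real T) * \<eta>
        + 4 * \<eta>^2 * \<beta>^2 * real T * ln (1 + real (card I) / \<gamma>)"
      unfolding fsf2.KK_def[OF F] NN \<beta>_def[symmetric] by (simp add: algebra_simps)
    then show ?thesis unfolding a1 g1 n1 l1_def by simp
  qed
  have L: "ln (real (card I) / \<alpha>) = ln (real (card I) * real T)" by (simp add: \<alpha>_def)
  define c where "c = ln (real (card I)) + 1 + (real S - 1) * ln (real (card I) * real T)"
  have "(ln (fsf.NN I) + real T * fsf2.KK h b D I \<eta> \<gamma> \<alpha> + (real S - 1) * ln (fsf.NN I / \<alpha>)) / \<eta>
     = (c + \<eta> + 4 * \<eta>^2 * \<beta>^2 * real T * l1) / \<eta>"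
    unfolding NN KK L c_def by (simp add: algebra_simps)
  also have "\<dots> = c / \<eta> + 1 + 4 * \<eta> * \<beta>^2 * real T * l1"
    using A(9) by (simp add: add_divide_distrib power2_eq_square)
  finally have "(ln (fsf.NN I) + real T * fsf2.KK h b D I \<eta> \<gamma> \<alpha> + (real S - 1) * ln (fsf.NN I / \<alpha>)) / \<eta>
     = c / \<eta> + 1 + 4 * \<eta> * \<beta>^2 * real T * l1" .
  then show ?thesis using R M by (simp add: \<gamma>_def \<alpha>_def \<beta>_def c_def l1_def)
qed

lemma trivial_general:
  fixes h b :: real and D T S :: nat and I :: "nat set" and d :: "nat \<Rightarrow> nat"
  assumes A: "T \<ge> 1" "h > 0" "b > 0" "I \<subseteq> {0..D}" "card I \<ge> 2"
    "2 * nv_beta h b D * real T > 1" "S \<ge> 1" "\<forall>t\<in>{1..T}. d t \<in> {0..D}" "\<eta> > 0"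
  shows "fsf_expected_regret h b D I T d S \<eta> (1 / (2 * nv_beta h b D * real T)) (1 / real T)
    \<le> nv_beta h b D * real T"
proof -
  define d' where "d' = (\<lambda>t. if t \<in> {1..T} then d t else 0)"
  have F: "fsf h b D I d' \<eta> (1 / (2 * nv_beta h b D * real T)) (1 / real T)"
    using mkloc(1)[OF A(1-6,8,9)] by (simp add: d'_def)
  have R: "fsf_expected_regret h b D I T d S \<eta> (1 / (2 * nv_beta h b D * real T)) (1 / real T)
     = fsf_expected_regret h b D I T d' S \<eta> (1 / (2 * nv_beta h b D * real T)) (1 / real T)"
    by (rule regret_cong) (simp add: d'_def)
  show ?thesis unfolding R by (rule fsf.trivial_bound[OF F A(1) A(7)])
qed




lemma sqrt_eta: fixes c \<beta> T L :: real assumes "c \<ge> 0" "\<beta> > 0" "T * L > 0"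
  shows "sqrt (c / (4 * \<beta>^2 * T * L)) = sqrt c / (2 * \<beta> * sqrt (T * L))"
proof -
  have "4 * \<beta>^2 * T * L = (2 * \<beta> * sqrt (T * L))^2" using assms by (simp add: power_mult_distrib)
  then have "sqrt (4 * \<beta>^2 * T * L) = 2 * \<beta> * sqrt (T * L)" using assms by simp
  then show ?thesis by (simp add: real_sqrt_divide)
qed

lemma arith_a: fixes \<beta> T \<Lambda> L l1 lnN S :: real
  assumes "\<beta> > 0" "T > 0" "\<Lambda> > 0" "L > 0" "lnN + 1 \<le> \<Lambda>" "0 \<le> l1" "l1 \<le> L" "S \<ge> 1" "lnN \<ge> 0"
  shows "(lnN + 1 + (S - 1) * \<Lambda>) / sqrt (\<Lambda> / (4 * \<beta>^2 * T * L)) + 1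
          + 4 * sqrt (\<Lambda> / (4 * \<beta>^2 * T * L)) * \<beta>^2 * T * l1
         \<le> 2 * (S + 1) * \<beta> * sqrt (T * \<Lambda> * L) + 2 * \<beta> * sqrt (T * lnN) + 2"
proof -
  define u where "u = sqrt (T * L)"
  define v where "v = sqrt \<Lambda>"
  have TL: "T * L > 0" using assms by simp
  have u: "u > 0" "u^2 = T * L" using TL by (auto simp: u_def)
  have v: "v > 0" "v^2 = \<Lambda>" using assms by (auto simp: v_def)
  define \<eta> where "\<eta> = v / (2 * \<beta> * u)"
  have eta: "sqrt (\<Lambda> / (4 * \<beta>^2 * T * L)) = \<eta>"
    using sqrt_eta[of \<Lambda> \<beta> T L] assms TL by (simp add: \<eta>_def u_def v_def)
  have ep: "\<eta> > 0" using u v assms by (simp add: \<eta>_def)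
  have s: "sqrt (T * \<Lambda> * L) = u * v" by (simp add: u_def v_def real_sqrt_mult[symmetric] mult_ac)
  have X: "lnN + 1 + (S - 1) * \<Lambda> \<le> S * \<Lambda>" using assms by (simp add: algebra_simps)
  have "(lnN + 1 + (S - 1) * \<Lambda>) / \<eta> \<le> S * \<Lambda> / \<eta>" using X ep by (intro divide_right_mono) simp_all
  also have "S * \<Lambda> / \<eta> = S * (2 * \<beta> * u * v)" using u v assms
    by (simp add: \<eta>_def field_simps power2_eq_square v(2)[symmetric])
  finally have t1: "(lnN + 1 + (S - 1) * \<Lambda>) / \<eta> \<le> S * (2 * \<beta> * u * v)" .
  have "4 * \<eta> * \<beta>^2 * T * l1 \<le> 4 * \<eta> * \<beta>^2 * T * L" using assms ep by (intro mult_left_mono) auto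
  also have "4 * \<eta> * \<beta>^2 * T * L = 2 * \<beta> * u * v" using u v assms
    by (simp add: \<eta>_def field_simps power2_eq_square u(2)[symmetric])
  finally have t2: "4 * \<eta> * \<beta>^2 * T * l1 \<le> 2 * \<beta> * u * v" .
  have t3: "0 \<le> 2 * \<beta> * sqrt (T * lnN)" using assms by simp
  have "(lnN + 1 + (S - 1) * \<Lambda>) / \<eta> + 1 + 4 * \<eta> * \<beta>^2 * T * l1 \<le> 2 * (S + 1) * \<beta> * (u * v) + 2 * \<beta> * sqrt (T * lnN) + 2"
    using t1 t2 t3 by (simp add: algebra_simps)
  then show ?thesis unfolding eta s by (simp add: mult_ac)
qed

lemma arith_b: fixes \<beta> T \<Lambda> L l1 lnN S :: real
  assumes "\<beta> > 0" "T > 0" "\<Lambda> > 0" "L > 0" "lnN + 1 \<le> \<Lambda>" "0 \<le> l1" "l1 \<le> L" "S \<ge> 1" "lnN \<ge> 0"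
  shows "(lnN + 1 + (S - 1) * \<Lambda>) / sqrt (S * \<Lambda> / (4 * \<beta>^2 * T * L)) + 1
          + 4 * sqrt (S * \<Lambda> / (4 * \<beta>^2 * T * L)) * \<beta>^2 * T * l1
         \<le> 4 * \<beta> * sqrt (S * T * \<Lambda> * L) + 2 * \<beta> * sqrt (T * lnN) + 2"
proof -
  define u where "u = sqrt (T * L)"
  define v where "v = sqrt \<Lambda>"
  define w where "w = sqrt S"
  have TL: "T * L > 0" using assms by simp
  have u: "u > 0" "u^2 = T * L" using TL by (auto simp: u_def)
  have v: "v > 0" "v^2 = \<Lambda>" using assms by (auto simp: v_def)
  have w: "w > 0" "w^2 = S" using assms by (auto simp: w_def)
  define \<eta> where "\<eta> = w * v / (2 * \<beta> * u)"
  have eta: "sqrt (S * \<Lambda> / (4 * \<beta>^2 * T * L)) = \<eta>"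
    using sqrt_eta[of "S * \<Lambda>" \<beta> T L] assms TL by (simp add: \<eta>_def u_def v_def w_def real_sqrt_mult)
  have ep: "\<eta> > 0" using u v w assms by (simp add: \<eta>_def)
  have s: "sqrt (S * T * \<Lambda> * L) = w * u * v" by (simp add: u_def v_def w_def real_sqrt_mult[symmetric] mult_ac)
  have X: "lnN + 1 + (S - 1) * \<Lambda> \<le> S * \<Lambda>" using assms by (simp add: algebra_simps)
  have "(lnN + 1 + (S - 1) * \<Lambda>) / \<eta> \<le> S * \<Lambda> / \<eta>" using X ep by (intro divide_right_mono) simp_all
  also have "S * \<Lambda> / \<eta> = 2 * \<beta> * w * u * v" using u v w assms
    by (simp add: \<eta>_def field_simps power2_eq_square v(2)[symmetric] w(2)[symmetric])
  finally have t1: "(lnN + 1 + (S - 1) * \<Lambda>) / \<eta> \<le> 2 * \<beta> * w * u * v" .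
  have "4 * \<eta> * \<beta>^2 * T * l1 \<le> 4 * \<eta> * \<beta>^2 * T * L" using assms ep by (intro mult_left_mono) auto
  also have "4 * \<eta> * \<beta>^2 * T * L = 2 * \<beta> * w * u * v" using u v w assms
    by (simp add: \<eta>_def field_simps power2_eq_square u(2)[symmetric])
  finally have t2: "4 * \<eta> * \<beta>^2 * T * l1 \<le> 2 * \<beta> * w * u * v" .
  have t3: "0 \<le> 2 * \<beta> * sqrt (T * lnN)" using assms by simp
  have "(lnN + 1 + (S - 1) * \<Lambda>) / \<eta> + 1 + 4 * \<eta> * \<beta>^2 * T * l1 \<le> 4 * \<beta> * (w * u * v) + 2 * \<beta> * sqrt (T * lnN) + 2"
    using t1 t2 t3 by (simp add: algebra_simps)
  then show ?thesis unfolding eta s by (simp add: mult_ac)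
qed


lemma small_T: fixes \<beta> T \<Lambda> L :: real
  assumes "\<beta> > 0" "1 \<le> T" "T \<le> 2" "\<Lambda> \<ge> 1/2" "L \<ge> 1/2"
  shows "\<beta> * T \<le> 4 * \<beta> * sqrt (T * \<Lambda> * L)"
proof -
  have "\<Lambda> * L \<ge> 1/2 * (1/2)" using assms by (intro mult_mono) auto
  then have "T * (\<Lambda> * L) \<ge> T * (1/4)" using assms by (intro mult_left_mono) auto
  moreover have "(T / 4)^2 \<le> T * (1/4)" using assms by (simp add: power2_eq_square field_simps)
  ultimately have "(T / 4)^2 \<le> T * \<Lambda> * L" by (simp add: mult_ac)
  then have "T / 4 \<le> sqrt (T * \<Lambda> * L)" by (rule real_le_rsqrt)
  then show ?thesis using assms by (simp add: field_simps)
qed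

lemma ln2_half: "ln (2::real) \<ge> 1/2"
proof -
  have "ln (1/2::real) \<le> 1/2 - 1" by (rule ln_le_minus_one) simp
  then show ?thesis by (simp add: ln_div)
qed


theorem theorem2:
  fixes h b :: real and D T S :: nat and I :: "nat set" and d :: "nat \<Rightarrow> nat"
  assumes "T \<ge> 1" "D \<ge> 1" "h > 0" "b > 0"
    and "I \<subseteq> {0..D}" "card I \<ge> 2"
    and "2 * nv_beta h b D * real T > 1"
    and "S \<ge> 1"
    and "\<forall>t\<in>{1..T}. d t \<in> {0..D}"
  shows
   "fsf_expected_regret h b D I T d S
      (sqrt (ln (real (card I) * real T) /
        (4 * (nv_beta h b D)^2 * real T *
         ln (2 * nv_beta h b D * real T * real (card I)^3 + real (card I) + 2))))
      (1 / (2 * nv_beta h b D * real T)) (1 / real T)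
    \<le> 2 * (real S + 1) * nv_beta h b D *
        sqrt (real T * ln (real (card I) * real T) *
              ln (2 * nv_beta h b D * real T * real (card I)^3 + real (card I) + 2))
      + 2 * nv_beta h b D * sqrt (real T * ln (real (card I))) + 2
   \<and>
   fsf_expected_regret h b D I T d S
      (sqrt (real S * ln (real (card I) * real T) /
        (4 * (nv_beta h b D)^2 * real T *
         ln (2 * nv_beta h b D * real T * real (card I)^3 + real (card I) + 2))))
      (1 / (2 * nv_beta h b D * real T)) (1 / real T)
    \<le> 4 * nv_beta h b D *
        sqrt (real S * real T * ln (real (card I) * real T) *
              ln (2 * nv_beta h b D * real T * real (card I)^3 + real (card I) + 2))
      + 2 * nv_beta h b D * sqrt (real T * ln (real (card I))) + 2"
  proof -
  define N where "N = real (card I)"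
  define \<beta> where "\<beta> = nv_beta h b D"
  define \<Lambda> where "\<Lambda> = ln (real (card I) * real T)"
  define L where "L = ln (2 * nv_beta h b D * real T * real (card I)^3 + real (card I) + 2)"
  define l1 where "l1 = ln (1 + 2 * nv_beta h b D * real T * real (card I))"
  define lnN where "lnN = ln (real (card I))"
  have N2: "N \<ge> 2" using assms(6) by (simp add: N_def)
  have Tp: "real T \<ge> 1" using assms(1) by simp
  have bTp: "\<beta> * real T > 1/2" using assms(7) by (simp add: \<beta>_def)
  have bp: "\<beta> > 0"
  proof (rule ccontr)
    assume "\<not> \<beta> > 0"
    then have "\<beta> * real T \<le> 0" using Tp mult_nonpos_nonneg[of \<beta> "real T"] by simp
    then show False using bTp by simp
  qed
  have lnN: "lnN \<ge> 0" using N2 by (simp add: lnN_def N_def)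
  have Lam: "\<Lambda> \<ge> 1/2"
  proof -
    have "N * real T \<ge> 2 * 1" using N2 Tp by (intro mult_mono) auto
    then have "ln (N * real T) \<ge> ln 2" by simp
    then show ?thesis using ln2_half by (simp add: \<Lambda>_def N_def)
  qed
  have N3: "N^3 \<ge> N" using N2 by (smt (verit) one_le_numeral power_increasing power_one_right)
  have argL: "2 * \<beta> * real T * N^3 + N + 2 \<ge> 1 + 2 * \<beta> * real T * N"
  proof -
    have "2 * \<beta> * real T * N^3 \<ge> 2 * \<beta> * real T * N" using N3 bp Tp by (intro mult_left_mono) auto
    then show ?thesis using N2 by linarith
  qed
  have l1: "0 \<le> l1" "l1 \<le> L"
  proof -
    have a: "1 + 2 * \<beta> * real T * N \<ge> 1" using bp Tp N2 by simp
    then show "0 \<le> l1" by (simp add: l1_def \<beta>_def N_def)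
    show "l1 \<le> L" unfolding l1_def L_def \<beta>_def[symmetric] N_def[symmetric]
      using a argL by (intro ln_mono) (auto simp: mult_ac)
  qed
  have LL: "L \<ge> 1/2"
  proof -
    have "2 * \<beta> * real T * N^3 + N + 2 \<ge> 2" using bp Tp N2 by (smt (verit) mult_nonneg_nonneg zero_le_power)
    then have "L \<ge> ln 2" by (simp add: L_def \<beta>_def N_def)
    then show ?thesis using ln2_half by simp
  qed
  define \<eta>a where "\<eta>a = sqrt (\<Lambda> / (4 * \<beta>^2 * real T * L))"
  define \<eta>b where "\<eta>b = sqrt (real S * \<Lambda> / (4 * \<beta>^2 * real T * L))"
  have ea: "\<eta>a > 0" using Lam LL bp Tp by (simp add: \<eta>a_def)
  have eb: "\<eta>b > 0" using Lam LL bp Tp assms(8) by (simp add: \<eta>b_def)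
  have Sr: "real S \<ge> 1" using assms(8) by simp
  have RA0: "0 \<le> 2 * (real S + 1) * \<beta> * sqrt (real T * \<Lambda> * L)" "0 \<le> 2 * \<beta> * sqrt (real T * lnN)"
    "0 \<le> 4 * \<beta> * sqrt (real S * real T * \<Lambda> * L)"
    using bp Lam LL Tp lnN by auto
  have A: "fsf_expected_regret h b D I T d S \<eta>a (1 / (2 * \<beta> * real T)) (1 / real T)
     \<le> 2 * (real S + 1) * \<beta> * sqrt (real T * \<Lambda> * L) + 2 * \<beta> * sqrt (real T * lnN) + 2
     \<and> fsf_expected_regret h b D I T d S \<eta>b (1 / (2 * \<beta> * real T)) (1 / real T)
     \<le> 4 * \<beta> * sqrt (real S * real T * \<Lambda> * L) + 2 * \<beta> * sqrt (real T * lnN) + 2"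
  proof (cases "\<beta> * real T \<ge> 1 \<and> real T \<ge> 3")
    case True
    have lnT: "ln (real T) \<ge> 1"
    proof -
      have "ln (real T) \<ge> ln 3" using True by simp
      moreover have "ln (3::real) \<ge> 1" using exp_le by (simp add: ln_ge_iff)
      ultimately show ?thesis by linarith
    qed
    have lam: "lnN + 1 \<le> \<Lambda>" using lnT N2 Tp by (simp add: lnN_def \<Lambda>_def N_def ln_mult)
    have Lp: "\<Lambda> > 0" "L > 0" using Lam LL by auto
    have "fsf_expected_regret h b D I T d S \<eta>a (1 / (2 * \<beta> * real T)) (1 / real T)
       \<le> (lnN + 1 + (real S - 1) * \<Lambda>) / \<eta>a + 1 + 4 * \<eta>a * \<beta>^2 * real T * l1"
      unfolding lnN_def \<Lambda>_def l1_def \<beta>_def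
      by (rule bound_general[OF assms(1,3,4,5,6,7,8,9) ea[unfolded \<beta>_def]]) (use True in \<open>simp add: \<beta>_def\<close>)
    also have "\<dots> \<le> 2 * (real S + 1) * \<beta> * sqrt (real T * \<Lambda> * L) + 2 * \<beta> * sqrt (real T * lnN) + 2"
      unfolding \<eta>a_def by (rule arith_a[OF bp _ Lp lam l1 Sr lnN]) (use Tp in simp)
    finally have 1: "fsf_expected_regret h b D I T d S \<eta>a (1 / (2 * \<beta> * real T)) (1 / real T)
       \<le> 2 * (real S + 1) * \<beta> * sqrt (real T * \<Lambda> * L) + 2 * \<beta> * sqrt (real T * lnN) + 2" .
    have "fsf_expected_regret h b D I T d S \<eta>b (1 / (2 * \<beta> * real T)) (1 / real T)
       \<le> (lnN + 1 + (real S - 1) * \<Lambda>) / \<eta>b + 1 + 4 * \<eta>b * \<beta>^2 * real T * l1"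
      unfolding lnN_def \<Lambda>_def l1_def \<beta>_def
      by (rule bound_general[OF assms(1,3,4,5,6,7,8,9) eb[unfolded \<beta>_def]]) (use True in \<open>simp add: \<beta>_def\<close>)
    also have "\<dots> \<le> 4 * \<beta> * sqrt (real S * real T * \<Lambda> * L) + 2 * \<beta> * sqrt (real T * lnN) + 2"
      unfolding \<eta>b_def by (rule arith_b[OF bp _ Lp lam l1 Sr lnN]) (use Tp in simp)
    finally show ?thesis using 1 by simp
  next
    case False
    have ta: "fsf_expected_regret h b D I T d S \<eta>a (1 / (2 * \<beta> * real T)) (1 / real T) \<le> \<beta> * real T"
      unfolding \<beta>_def by (rule trivial_general[OF assms(1,3,4,5,6,7,8,9) ea[unfolded \<beta>_def]])
    have tb: "fsf_expected_regret h b D I T d S \<eta>b (1 / (2 * \<beta> * real T)) (1 / real T) \<le> \<beta> * real T"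
      unfolding \<beta>_def by (rule trivial_general[OF assms(1,3,4,5,6,7,8,9) eb[unfolded \<beta>_def]])
    show ?thesis
    proof (cases "\<beta> * real T < 1")
      case True
      then show ?thesis using ta tb RA0 by linarith
    next
      case F2: False
      then have T2: "real T \<le> 2" using False by simp
      have s: "\<beta> * real T \<le> 4 * \<beta> * sqrt (real T * \<Lambda> * L)" by (rule small_T[OF bp Tp T2 Lam LL])
      have "4 * \<beta> * sqrt (real T * \<Lambda> * L) \<le> 2 * (real S + 1) * \<beta> * sqrt (real T * \<Lambda> * L)"
        using Sr bp Lam LL Tp by (intro mult_right_mono) auto
      moreover have "sqrt (real T * \<Lambda> * L) \<le> sqrt (real S * real T * \<Lambda> * L)"
        using Sr Tp Lam LL by (intro real_sqrt_le_mono) (simp add: mult_ac mult_le_cancel_right1 mult_pos_pos)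
      then have "4 * \<beta> * sqrt (real T * \<Lambda> * L) \<le> 4 * \<beta> * sqrt (real S * real T * \<Lambda> * L)"
        using bp by simp
      ultimately show ?thesis using ta tb s RA0 by linarith
    qed
  qed
  then show ?thesis
    unfolding \<eta>a_def \<eta>b_def \<beta>_def \<Lambda>_def L_def lnN_def by simp
qed


end
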